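(* Let $R$ be an integral domain and $M$ an $R$-module. If $x\in M$ is not $R$-torsion and $y\in M$ is $R$-torsion, then $[x]=[x+y]$ in $\mathbb{P}(M)$.
   Context: For an $R$-module $M$ let $M^\circ=M\setminus\{0\}$; define $x\sim'y$ on $M^\circ$ if there exist $m\in M$ and $r,s\in R$ with $x=rm$, $y=sm$; let $\sim$ be the equivalence relation generated by $\sim'$; and let $\mathbb{P}(M)=M^\circ/\sim$, with $[x]$ the class of $x$. An element $y$ is $R$-torsion if $ry=0$ for some nonzero $r\in R$. *)

theory Defs
  imports Complex_Main
begin

text \<open>Modules over a commutative ring are given by the library locale module scale
  (scalars of type class comm_ring_1, here idom for an integral domain).\<close>

definition proj_pre :: "('a::comm_ring_1 \<Rightarrow> 'b::ab_group_add \<Rightarrow> 'b) \<Rightarrow> 'b \<Rightarrow> 'b \<Rightarrow> bool" where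
  "proj_pre scale x y \<longleftrightarrow> x \<noteq> 0 \<and> y \<noteq> 0 \<and> (\<exists>m r s. x = scale r m \<and> y = scale s m)"

definition proj_rel :: "('a::comm_ring_1 \<Rightarrow> 'b::ab_group_add \<Rightarrow> 'b) \<Rightarrow> 'b \<Rightarrow> 'b \<Rightarrow> bool" where
  "proj_rel scale x y \<longleftrightarrow> x \<noteq> 0 \<and> y \<noteq> 0 \<and> equivclp (proj_pre scale) x y"

definition proj_class :: "('a::comm_ring_1 \<Rightarrow> 'b::ab_group_add \<Rightarrow> 'b) \<Rightarrow> 'b \<Rightarrow> 'b set" where
  "proj_class scale x = {y. proj_rel scale x y}"

definition torsion_elem :: "('a::comm_ring_1 \<Rightarrow> 'b::ab_group_add \<Rightarrow> 'b) \<Rightarrow> 'b \<Rightarrow> bool" where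
  "torsion_elem scale y \<longleftrightarrow> (\<exists>r. r \<noteq> 0 \<and> scale r y = 0)"

end

theory Submission
  imports Defs
begin

theorem theorem4p16:
  fixes scale :: "'a::idom \<Rightarrow> 'b::ab_group_add \<Rightarrow> 'b" and x y :: 'b
  assumes "module scale"
    and "\<not> torsion_elem scale x"
    and "torsion_elem scale y"
  shows "x \<noteq> 0 \<and> x + y \<noteq> 0 \<and> proj_class scale x = proj_class scale (x + y)"
proof -
  interpret module scale by fact
  obtain r where r: "r \<noteq> 0" "scale r y = 0" using assms(3) unfolding torsion_elem_def by blast
  have x0: "x \<noteq> 0" using assms(2) unfolding torsion_elem_def
    by (metis one_neq_zero scale_zero_right)
  have xy0: "x + y \<noteq> 0"
  proof
    assume "x + y = 0"
    then have "x = - y" by (simp add: eq_neg_iff_add_eq_0)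
    then have "scale r x = 0" using r by (simp add: scale_minus_right)
    then show False using assms(2) r unfolding torsion_elem_def by blast
  qed
  have rx: "scale r x \<noteq> 0" using assms(2) r unfolding torsion_elem_def by blast
  have eq: "scale r (x + y) = scale r x" using r by (simp add: scale_right_distrib)
  have p1: "proj_pre scale x (scale r x)" unfolding proj_pre_def
    using x0 rx by (metis scale_one)
  have p2: "proj_pre scale (x + y) (scale r x)" unfolding proj_pre_def
    using xy0 rx eq by (metis scale_one)
  have e: "equivclp (proj_pre scale) x (x + y)"
    by (meson p1 p2 equivclp_sym r_into_equivclp equivclp_trans)
  have "proj_rel scale x z \<longleftrightarrow> proj_rel scale (x + y) z" for z
    unfolding proj_rel_def using e x0 xy0
    by (meson equivclp_sym equivclp_trans)
  then show ?thesis using x0 xy0 unfolding proj_class_def by blast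
qed

end
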